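(* In the setting below, if $\eta \geq \eta_0$, then $|\tilde{w}_t| \leq \eta$ for all integers $0 \le t < \tau$.
   Context: Dimension $d=2$. Data $x_1,\dots,x_n\in\mathbb{R}^2$ with $\|x_i\|\le 1$, linearly separable (some $w$ has $\langle w,x_i\rangle>0$ for all $i$). $F(w) = \frac{1}{n}\sum_{i=1}^n \log(1+\exp(-\langle w, x_i\rangle))$. Maximum margin $\gamma = \max_{\|w\|=1}\min_i \langle w, x_i\rangle$ with maximizer the unit vector $w_*$; $v_*$ is a fixed unit vector orthogonal to $w_*$. Gradient descent: $w_0=0$, $w_{t+1} = w_t - \eta\nabla F(w_t)$ with constant $\eta>0$. $\tilde{w}_t = \langle w_t, v_*\rangle$. $\tau = \min\{t\ge 0: F(w_t)\le 1/(8\eta)\}$. $\eta_0 = \max(n, \frac{32}{\gamma^2}\log\frac{256}{\gamma^2})$. *)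

theory Defs
  imports "HOL-Analysis.Analysis"
begin

definition logistic_risk :: "nat \<Rightarrow> (nat \<Rightarrow> real^2) \<Rightarrow> real^2 \<Rightarrow> real" where
  "logistic_risk n x w = (1 / real n) * (\<Sum>i<n. ln (1 + exp (- (w \<bullet> x i))))"

definition logistic_grad :: "nat \<Rightarrow> (nat \<Rightarrow> real^2) \<Rightarrow> real^2 \<Rightarrow> real^2" where
  "logistic_grad n x w = - ((1 / real n) *\<^sub>R (\<Sum>i<n. (1 / (1 + exp (w \<bullet> x i))) *\<^sub>R x i))"

fun gd_iter :: "nat \<Rightarrow> (nat \<Rightarrow> real^2) \<Rightarrow> real \<Rightarrow> nat \<Rightarrow> real^2" where
  "gd_iter n x \<eta> 0 = 0"
| "gd_iter n x \<eta> (Suc t) = gd_iter n x \<eta> t - \<eta> *\<^sub>R logistic_grad n x (gd_iter n x \<eta> t)"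

definition max_margin :: "nat \<Rightarrow> (nat \<Rightarrow> real^2) \<Rightarrow> real" where
  "max_margin n x = (SUP w \<in> {w. norm w = 1}. (MIN i \<in> {..<n}. w \<bullet> x i))"

end

theory Submission
  imports Defs
begin

lemma orth_aux:
  fixes a1 a2 b1 b2 :: real
  assumes "a1*a1 + a2*a2 = 1" "b1*b1 + b2*b2 = 1" "a1*b1 + a2*b2 = 0"
  shows "a1*a1 + b1*b1 = 1 \<and> a2*a2 + b2*b2 = 1 \<and> a1*a2 + b1*b2 = 0"
proof -
  have 1: "a1*a1 + b1*b1 = 1" using assms by algebra
  have 2: "a2*a2 + b2*b2 = 1" using assms by algebra
  have "(a1*a2 + b1*b2)^2 = 0" using assms 1 2 by algebra
  then show ?thesis using 1 2 by simp
qed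

lemma decomp2:
  fixes w y e f :: "real^2"
  assumes "e \<bullet> e = 1" "f \<bullet> f = 1" "e \<bullet> f = 0"
  shows "w \<bullet> y = (w \<bullet> e) * (e \<bullet> y) + (w \<bullet> f) * (f \<bullet> y)"
proof -
  have h: "e$1*e$1+e$2*e$2=1" "f$1*f$1+f$2*f$2=1" "e$1*f$1+e$2*f$2=0"
    using assms by (simp_all add: inner_vec_def sum_2)
  from orth_aux[OF h] have o: "e$1*e$1+f$1*f$1=1" "e$2*e$2+f$2*f$2=1" "e$1*e$2+f$1*f$2=0" by auto
  show ?thesis unfolding inner_vec_def sum_2 inner_real_def
    using o by algebra
qed

lemma numeric:
  fixes \<gamma> \<eta> :: real
  assumes g0: "0 < \<gamma>" and g1: "\<gamma> \<le> 1" and e1: "1 \<le> \<eta>"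
    and el: "32 / \<gamma>^2 * ln (256 / \<gamma>^2) \<le> \<eta>"
  shows "ln (16*\<eta>) < \<eta>*\<gamma>^2/2 \<and> exp (-(\<eta>*\<gamma>^2/2)) * (32*\<eta>^2) \<le> \<eta>*\<gamma>^2/2 - ln (16*\<eta>)"
proof -
  define u where "u = \<eta>*\<gamma>^2/2"
  define L where "L = ln (256 / \<gamma>^2)"
  have gg: "0 < \<gamma>^2" "\<gamma>^2 \<le> 1" using g0 g1 by (auto simp: power_le_one)
  have "256 \<le> 256/\<gamma>^2" using gg by (simp add: field_simps)
  have "exp 1 \<le> 256/\<gamma>^2" using e_less_272 \<open>256 \<le> 256/\<gamma>^2\<close> by linarith
  hence L1: "1 \<le> L" unfolding L_def using gg by (metis ln_exp ln_le_cancel_iff exp_gt_zero less_le_trans zero_less_one exp_le_cancel_iff)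
  have "32 * L \<le> \<eta> * \<gamma>^2" using el gg unfolding L_def by (simp add: field_simps)
  hence uL: "16 * L \<le> u" unfolding u_def by simp
  hence u16: "16 \<le> u" using L1 by linarith
  have ln8: "ln (8::real) \<le> 3"
  proof -
    have "ln (8::real) = ln (2^3)" by simp
    also have "\<dots> = 3 * ln 2" by (subst ln_realpow) auto
    finally show ?thesis using ln_2_less_1 by linarith
  qed
  have lnu: "ln u \<le> u/4"
  proof -
    have "ln (u/8) \<le> u/8 - 1" using u16 by (intro ln_le_minus_one) auto
    moreover have "ln (u/8) = ln u - ln 8" using u16 by (simp add: ln_div)
    ultimately show ?thesis using ln8 u16 by linarith
  qed
  have eta_eq: "\<eta> = 2*u/\<gamma>^2" unfolding u_def using gg by simp
  have "16*\<eta> = (256/\<gamma>^2) * u / 8" unfolding eta_eq by (simp add: field_simps)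
  hence "ln (16*\<eta>) = ln ((256/\<gamma>^2) * u) - ln 8" using gg u16
  proof -
    assume h: "16*\<eta> = (256/\<gamma>^2) * u / 8"
    have "0 < (256/\<gamma>^2) * u" using gg u16 by simp
    thus ?thesis unfolding h using gg u16 by (simp only: ln_div[of "(256/\<gamma>^2) * u" 8]) simp
  qed
  also have "ln ((256/\<gamma>^2) * u) = L + ln u" unfolding L_def using gg u16 by (subst ln_mult) auto
  finally have "ln (16*\<eta>) = L + ln u - ln 8" .
  hence Z: "ln (16*\<eta>) \<le> L + ln u" using ln8 by (smt (verit) ln_ge_zero)
  have Zu: "ln (16*\<eta>) \<le> u/2" using Z lnu uL u16 by linarith
  have "ln (256 * u / \<gamma>^4) = L + ln u + ln (1/\<gamma>^2)"
  proof -
    have "256 * u / \<gamma>^4 = (256/\<gamma>^2) * u * (1/\<gamma>^2)" by (simp add: field_simps power4_eq_xxxx power2_eq_square)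
    hence "ln (256 * u / \<gamma>^4) = ln ((256/\<gamma>^2) * u * (1/\<gamma>^2))" by (simp only:)
    also have "\<dots> = ln ((256/\<gamma>^2) * u) + ln (1/\<gamma>^2)" using gg u16 by (intro ln_mult_pos) auto
    also have "ln ((256/\<gamma>^2) * u) = L + ln u" unfolding L_def using gg u16 by (intro ln_mult_pos) auto
    finally show ?thesis .
  qed
  moreover have "ln (1/\<gamma>^2) \<le> L" unfolding L_def using gg by (subst ln_le_cancel_iff) (auto simp: field_simps)
  ultimately have "ln (256 * u / \<gamma>^4) \<le> u" using lnu uL L1 by linarith
  moreover have pos: "0 < 256 * u / \<gamma>^4" using gg u16 g0 by simp
  ultimately have "256 * u / \<gamma>^4 \<le> exp u"
    by (metis exp_ln exp_le_cancel_iff)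
  hence A: "256 * u \<le> exp u * \<gamma>^4" using gg by (simp add: field_simps)
  have "exp (-u) * (32*\<eta>^2) = 32 * (4*u^2/\<gamma>^4) / exp u"
    unfolding eta_eq by (simp add: exp_minus field_simps power2_eq_square power4_eq_xxxx)
  also have "\<dots> \<le> u/2"
    using A gg u16 by (simp add: field_simps power2_eq_square power4_eq_xxxx)
  finally have "exp (-u) * (32*\<eta>^2) \<le> u/2" .
  thus ?thesis using Zu u16 unfolding u_def by linarith
qed

lemma key:
  fixes n :: nat and z \<alpha> \<beta> :: "nat \<Rightarrow> real" and a b \<eta> \<gamma> u Z :: real
  assumes eta_n: "real n \<le> \<eta>" and eta0: "0 < \<eta>"
    and Zdef: "Z = ln (16*\<eta>)" and Zu: "Z < u"
    and num: "exp (-u) * (32*\<eta>^2) \<le> u - Z"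
    and a0: "0 \<le> a" and au: "u \<le> a*\<gamma>" and b0: "0 \<le> b" and beta: "b \<le> \<eta>"
    and zdef: "\<forall>i<n. z i = a*\<alpha> i + b*\<beta> i" and agam: "\<forall>i<n. \<gamma> \<le> \<alpha> i"
    and bet1: "\<forall>i<n. \<bar>\<beta> i\<bar> \<le> 1"
    and F: "1/(8*\<eta>) < (1/real n) * (\<Sum>i<n. ln (1 + exp (- z i)))"
  shows "(\<Sum>i<n. (1/(1+exp(z i))) * \<beta> i) \<le> 0"
proof -
  define g where "g i = 1/(1+exp(z i))" for i
  define l where "l i = ln (1 + exp (- z i))" for i
  have n0: "0 < n" using F eta0 by (cases n) auto
  have aal: "u \<le> a * \<alpha> i" if "i<n" for i
  proof -
    have "a*\<gamma> \<le> a * \<alpha> i" using agam that a0 by (intro mult_left_mono) auto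
    thus ?thesis using au by linarith
  qed
  have gpos: "0 < g i" "g i \<le> 1" for i unfolding g_def by (auto simp: add_pos_pos)
  have ep: "0 < exp (z i)" for i by simp
  have ep1: "0 < 1 + exp (z i)" for i using ep[of i] by linarith
  have gexp: "g i \<le> exp (- z i)" for i
  proof -
    have "g i = 1 / (1 + exp (z i))" by (simp add: g_def)
    also have "\<dots> \<le> 1 / exp (z i)" apply (rule frac_le) using ep[of i] by linarith+
    finally show ?thesis by (simp add: exp_minus inverse_eq_divide)
  qed
  have lexp: "l i \<le> exp (- z i)" for i unfolding l_def by (intro ln_add_one_self_le_self) auto
  have lnn: "0 \<le> l i" for i unfolding l_def by simp
  have glow: "l i / 2 \<le> g i" if "0 \<le> z i" for i
  proof -
    have "1 \<le> exp (z i)" using that by simp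
    have "exp (- z i) / 2 = 1 / (2 * exp (z i))" by (simp add: exp_minus inverse_eq_divide)
    also have "\<dots> \<le> 1 / (1 + exp (z i))" 
      apply (rule frac_le) using ep[of i] \<open>1 \<le> exp (z i)\<close> by linarith+
    finally have "exp (- z i) / 2 \<le> g i" by (simp add: g_def)
    thus ?thesis using lexp[of i] by linarith
  qed
  have zneg: "1/2 < g i" if "z i < 0" for i
  proof -
    have "exp (z i) < 1" using that by simp
    have "1/2 < 1 / (1 + exp (z i))" 
      apply (rule frac_less2) using ep[of i] \<open>exp (z i) < 1\<close> by linarith+
    thus ?thesis by (simp add: g_def)
  qed
  have eZ: "exp (- Z) = 1/(16*\<eta>)" unfolding Zdef using eta0 by (simp add: exp_minus inverse_eq_divide)
  have pw: "g i * \<beta> i \<le> exp (-u) - (if z i \<le> Z then g i * ((u-Z)/\<eta>) else 0)" if i: "i<n" for i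
  proof (cases "\<beta> i > 0")
    case True
    have "b * \<beta> i \<ge> 0" using True b0 by simp
    hence zu: "u \<le> z i" using zdef aal[OF i] i by auto
    have "g i * \<beta> i \<le> g i" using bet1 i gpos[of i] by (intro mult_left_le) auto
    also have "\<dots> \<le> exp (- z i)" by (rule gexp)
    also have "\<dots> \<le> exp (-u)" using zu by simp
    finally show ?thesis using zu Zu by auto
  next
    case False
    show ?thesis
    proof (cases "z i \<le> Z")
      case True
      have "b * \<beta> i \<le> Z - u" using zdef aal[OF i] i True by auto
      hence "u - Z \<le> b * (- \<beta> i)" by simp
      also have "\<dots> \<le> \<eta> * (- \<beta> i)" using False beta by (intro mult_right_mono) auto
      finally have "(u - Z)/\<eta> \<le> - \<beta> i" using eta0 by (simp add: divide_simps mult.commute)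
      hence "g i * ((u - Z)/\<eta>) \<le> g i * (- \<beta> i)" using gpos[of i] by (intro mult_left_mono) auto
      moreover have "0 < exp (-u)" by simp
      ultimately show ?thesis by (simp only: if_P[OF True])
    next
      case False2: False
      have "g i * \<beta> i \<le> 0" using False gpos[of i] by (simp add: mult_nonneg_nonpos)
      moreover have "0 < exp (-u)" by simp
      ultimately show ?thesis by (simp only: if_not_P[OF False2] diff_zero)
    qed
  qed
  define SG where "SG = (\<Sum>i<n. if z i \<le> Z then g i else 0)"
  define SL where "SL = (\<Sum>i<n. if z i \<le> Z then l i else 0)"
  have S1: "(\<Sum>i<n. g i * \<beta> i) \<le> real n * exp (-u) - ((u-Z)/\<eta>) * SG"
  proof -
    have "(\<Sum>i<n. g i * \<beta> i) \<le> (\<Sum>i<n. exp (-u) - (if z i \<le> Z then g i * ((u-Z)/\<eta>) else 0))"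
      using pw by (intro sum_mono) auto
    also have "\<dots> = real n * exp (-u) - (\<Sum>i<n. (if z i \<le> Z then g i * ((u-Z)/\<eta>) else 0))"
      by (simp only: sum_subtractf sum_constant card_lessThan)
    also have "(\<Sum>i<n. (if z i \<le> Z then g i * ((u-Z)/\<eta>) else 0)) = ((u-Z)/\<eta>) * SG"
      unfolding SG_def sum_distrib_left by (intro sum.cong) auto
    finally show ?thesis .
  qed
  have "(\<Sum>i<n. l i) \<le> (\<Sum>i<n. (if z i \<le> Z then l i else 0) + 1/(16*\<eta>))"
  proof (intro sum_mono)
    fix i assume "i \<in> {..<n}"
    show "l i \<le> (if z i \<le> Z then l i else 0) + 1/(16*\<eta>)"
    proof (cases "z i \<le> Z")
      case False
      have "l i \<le> exp (- z i)" by (rule lexp)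
      also have "\<dots> \<le> exp (- Z)" using False by simp
      finally show ?thesis using False eZ by simp
    qed (use eta0 in simp)
  qed
  also have "\<dots> = SL + real n / (16*\<eta>)" unfolding SL_def by (simp add: sum.distrib)
  finally have SLb: "(\<Sum>i<n. l i) \<le> SL + real n / (16*\<eta>)" .
  have "real n / (8*\<eta>) < (\<Sum>i<n. l i)" using F n0 eta0 unfolding l_def
    by (simp add: divide_simps mult.commute)
  moreover have "real n / (16*\<eta>) = (real n / (8*\<eta>)) / 2" by simp
  ultimately have SLl: "real n / (16*\<eta>) < SL" using SLb by linarith
  have SGb: "real n / (32*\<eta>) \<le> SG"
  proof (cases "\<exists>i<n. z i \<le> Z \<and> z i < 0")
    case True
    then obtain i where i: "i<n" "z i \<le> Z" "z i < 0" by auto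
    have "real n / (32*\<eta>) \<le> 1/2" using eta_n eta0 by (simp add: divide_simps)
    also have "\<dots> \<le> g i" using zneg[OF i(3)] by simp
    also have "\<dots> = (if z i \<le> Z then g i else 0)" using i by simp
    also have "\<dots> \<le> SG" unfolding SG_def using i gpos
      by (intro member_le_sum) (auto intro: less_imp_le)
    finally show ?thesis .
  next
    case False
    have "SL / 2 \<le> SG" unfolding SL_def SG_def sum_divide_distrib
    proof (intro sum_mono)
      fix i assume i: "i \<in> {..<n}"
      show "(if z i \<le> Z then l i else 0) / 2 \<le> (if z i \<le> Z then g i else 0)"
        using False i glow[of i] by auto
    qed
    moreover have "real n / (32*\<eta>) = (real n / (16*\<eta>)) / 2" by simp
    ultimately show ?thesis using SLl by linarith
  qed
  have uZ: "0 \<le> (u - Z)/\<eta>" using Zu eta0 by simp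
  have "((u-Z)/\<eta>) * (real n / (32*\<eta>)) \<le> ((u-Z)/\<eta>) * SG"
    using SGb uZ by (intro mult_left_mono) auto
  moreover have "real n * exp (-u) \<le> ((u-Z)/\<eta>) * (real n / (32*\<eta>))"
  proof -
    have "real n * (exp (-u) * (32*\<eta>^2)) \<le> real n * (u - Z)" using num by (intro mult_left_mono) auto
    thus ?thesis using eta0 by (simp add: divide_simps power2_eq_square) (simp add: algebra_simps)
  qed
  ultimately show ?thesis using S1 unfolding g_def by linarith
qed

lemma gd_step:
  "gd_iter n x \<eta> (Suc t) \<bullet> y = gd_iter n x \<eta> t \<bullet> y
     + \<eta> * ((1/real n) * (\<Sum>i<n. (1/(1+exp(gd_iter n x \<eta> t \<bullet> x i))) * (x i \<bullet> y)))"
  by (simp add: logistic_grad_def inner_add_left inner_diff_left inner_minus_left inner_sum_left inner_scaleR_left)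

lemma margin_facts:
  fixes n :: nat and x :: "nat \<Rightarrow> real^2" and w_star :: "real^2"
  assumes n_pos: "n \<ge> 1"
    and bounded: "\<forall>i<n. norm (x i) \<le> 1"
    and separable: "\<exists>w. \<forall>i<n. w \<bullet> x i > 0"
    and w_star_unit: "norm w_star = 1"
    and w_star_max: "(MIN i \<in> {..<n}. w_star \<bullet> x i) = max_margin n x"
  shows "0 < max_margin n x \<and> max_margin n x \<le> 1 \<and> (\<forall>i<n. max_margin n x \<le> w_star \<bullet> x i)"
proof -
  have "0 \<in> {..<n}" using n_pos by simp
  hence ne: "{..<n} \<noteq> {}" by blast
  have low: "\<forall>i<n. max_margin n x \<le> w_star \<bullet> x i"
    using w_star_max[symmetric] by (auto intro: Min_le)
  have "w_star \<bullet> x 0 \<le> 1"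
  proof -
    have "\<bar>w_star \<bullet> x 0\<bar> \<le> norm w_star * norm (x 0)" by (rule Cauchy_Schwarz_ineq2)
    thus ?thesis using w_star_unit bounded n_pos by auto
  qed
  hence up: "max_margin n x \<le> 1" using low n_pos by force
  obtain w0 where w0: "\<forall>i<n. w0 \<bullet> x i > 0" using separable by auto
  have "w0 \<noteq> 0" using w0 n_pos by (metis inner_zero_left less_irrefl less_le_trans zero_less_one)
  define w1 where "w1 = (1/norm w0) *\<^sub>R w0"
  have nw1: "norm w1 = 1" unfolding w1_def using \<open>w0 \<noteq> 0\<close> by simp
  have pos1: "\<forall>i<n. w1 \<bullet> x i > 0" unfolding w1_def using w0 \<open>w0 \<noteq> 0\<close> by simp
  have m1: "0 < (MIN i \<in> {..<n}. w1 \<bullet> x i)" using pos1 ne by simp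
  have bdd: "bdd_above ((\<lambda>w. MIN i \<in> {..<n}. w \<bullet> x i) ` {w. norm w = 1})"
  proof (rule bdd_aboveI2)
    fix w :: "real^2" assume "w \<in> {w. norm w = 1}"
    hence nw: "norm w = 1" by simp
    have "(MIN i \<in> {..<n}. w \<bullet> x i) \<le> w \<bullet> x 0" using n_pos by (intro Min_le) auto
    also have "\<dots> \<le> 1"
    proof -
      have "\<bar>w \<bullet> x 0\<bar> \<le> norm w * norm (x 0)" by (rule Cauchy_Schwarz_ineq2)
      thus ?thesis using nw bounded n_pos by auto
    qed
    finally show "(MIN i \<in> {..<n}. w \<bullet> x i) \<le> 1" .
  qed
  have "(MIN i \<in> {..<n}. w1 \<bullet> x i) \<le> max_margin n x"
    unfolding max_margin_def using nw1 bdd by (intro cSUP_upper) auto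
  hence "0 < max_margin n x" using m1 by linarith
  thus ?thesis using up low by blast
qed

theorem lemma6:
  fixes n :: nat and x :: "nat \<Rightarrow> real^2" and \<eta> :: real
    and w_star v_star :: "real^2"
  assumes n_pos: "n \<ge> 1"
    and bounded: "\<forall>i<n. norm (x i) \<le> 1"
    and separable: "\<exists>w. \<forall>i<n. w \<bullet> x i > 0"
    and w_star_unit: "norm w_star = 1"
    and w_star_max: "(MIN i \<in> {..<n}. w_star \<bullet> x i) = max_margin n x"
    and v_star_unit: "norm v_star = 1"
    and v_star_orth: "v_star \<bullet> w_star = 0"
    and eta_pos: "\<eta> > 0"
    and eta_large: "\<eta> \<ge> max (real n)
          (32 / (max_margin n x)\<^sup>2 * ln (256 / (max_margin n x)\<^sup>2))"
  shows "\<forall>t. (\<forall>s\<le>t. logistic_risk n x (gd_iter n x \<eta> s) > 1 / (8 * \<eta>))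
             \<longrightarrow> \<bar>gd_iter n x \<eta> t \<bullet> v_star\<bar> \<le> \<eta>"
proof -
  define \<gamma> where "\<gamma> = max_margin n x"
  define W where "W t = gd_iter n x \<eta> t" for t
  define \<alpha> where "\<alpha> i = w_star \<bullet> x i" for i
  define \<beta> where "\<beta> i = v_star \<bullet> x i" for i
  define g where "g t i = 1/(1+exp(W t \<bullet> x i))" for t i
  define u where "u = \<eta>*\<gamma>^2/2"
  define Z where "Z = ln (16*\<eta>)"
  have mf: "0 < \<gamma>" "\<gamma> \<le> 1" "\<forall>i<n. \<gamma> \<le> \<alpha> i"
    using margin_facts[OF n_pos bounded separable w_star_unit w_star_max]
    unfolding \<gamma>_def \<alpha>_def by auto
  have eta_n: "real n \<le> \<eta>" and el: "32 / \<gamma>^2 * ln (256 / \<gamma>^2) \<le> \<eta>"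
    using eta_large unfolding \<gamma>_def by auto
  have eta1: "1 \<le> \<eta>" using eta_n n_pos by linarith
  have numr: "Z < u" "exp (-u) * (32*\<eta>^2) \<le> u - Z"
    using numeric[OF mf(1) mf(2) eta1 el] unfolding u_def Z_def by auto
  have ww: "w_star \<bullet> w_star = 1" using w_star_unit by (simp add: norm_eq_1)
  have vv: "v_star \<bullet> v_star = 1" using v_star_unit by (simp add: norm_eq_1)
  have wv: "w_star \<bullet> v_star = 0" using v_star_orth by (simp add: inner_commute)
  have dec: "W t \<bullet> x i = (W t \<bullet> w_star) * \<alpha> i + (W t \<bullet> v_star) * \<beta> i" for t i
    unfolding \<alpha>_def \<beta>_def by (rule decomp2[OF ww vv wv])
  have gpos: "0 < g t i" "g t i \<le> 1" for t i unfolding g_def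
    by (auto simp: add_pos_pos)
  have step: "W (Suc t) \<bullet> y = W t \<bullet> y + \<eta> * ((1/real n) * (\<Sum>i<n. g t i * (y \<bullet> x i)))" for t y
    unfolding W_def g_def gd_step by (simp add: inner_commute)
  have bet1: "\<forall>i<n. \<bar>\<beta> i\<bar> \<le> 1"
  proof (intro allI impI)
    fix i assume i: "i<n"
    have "\<bar>\<beta> i\<bar> \<le> norm v_star * norm (x i)" unfolding \<beta>_def by (rule Cauchy_Schwarz_ineq2)
    thus "\<bar>\<beta> i\<bar> \<le> 1" using v_star_unit bounded i by auto
  qed
  have amono: "W t \<bullet> w_star \<le> W (Suc t) \<bullet> w_star" for t
  proof -
    have "0 \<le> (\<Sum>i<n. g t i * (w_star \<bullet> x i))"
      using gpos mf unfolding \<alpha>_def by (intro sum_nonneg) (auto intro!: mult_nonneg_nonneg less_imp_le order.trans[OF _ ])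
    thus ?thesis unfolding step using eta_pos by simp
  qed
  have a1: "\<eta>*\<gamma>/2 \<le> W 1 \<bullet> w_star"
  proof -
    have g0: "g 0 i = 1/2" for i unfolding g_def W_def by simp
    have "real n * (\<gamma>/2) \<le> (\<Sum>i<n. g 0 i * (w_star \<bullet> x i))"
    proof -
      have "(\<Sum>i<n. \<gamma>/2) \<le> (\<Sum>i<n. g 0 i * (w_star \<bullet> x i))"
        using mf(3) unfolding g0 \<alpha>_def by (intro sum_mono) auto
      thus ?thesis by simp
    qed
    hence "\<gamma>/2 \<le> (1/real n) * (\<Sum>i<n. g 0 i * (w_star \<bullet> x i))"
      using n_pos by (simp add: field_simps)
    hence "\<eta>*(\<gamma>/2) \<le> \<eta> * ((1/real n) * (\<Sum>i<n. g 0 i * (w_star \<bullet> x i)))"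
      using eta_pos by (intro mult_left_mono) auto
    moreover have "W 0 \<bullet> w_star = 0" unfolding W_def by simp
    ultimately show ?thesis using step[of 0 w_star] by simp
  qed
  have alow: "\<eta>*\<gamma>/2 \<le> W t \<bullet> w_star" if "1 \<le> t" for t
    using that
  proof (induction t)
    case 0 thus ?case by simp
  next
    case (Suc t)
    show ?case
    proof (cases "t = 0")
      case True thus ?thesis using a1 by simp
    next
      case False
      hence "\<eta>*\<gamma>/2 \<le> W t \<bullet> w_star" using Suc by simp
      thus ?thesis using amono[of t] by linarith
    qed
  qed
  have Dbound: "\<bar>(1/real n) * (\<Sum>i<n. g t i * \<beta> i)\<bar> \<le> 1" for t
  proof -
    have "\<bar>\<Sum>i<n. g t i * \<beta> i\<bar> \<le> (\<Sum>i<n. \<bar>g t i * \<beta> i\<bar>)" by (rule sum_abs)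
    also have "\<dots> \<le> (\<Sum>i<n. 1)"
    proof (intro sum_mono)
      fix i assume "i \<in> {..<n}"
      hence "\<bar>\<beta> i\<bar> \<le> 1" using bet1 by auto
      moreover have "\<bar>g t i\<bar> \<le> 1" using gpos[of t i] by auto
      ultimately show "\<bar>g t i * \<beta> i\<bar> \<le> 1" by (simp add: abs_mult mult_le_one)
    qed
    finally have "\<bar>\<Sum>i<n. g t i * \<beta> i\<bar> \<le> real n" by simp
    thus ?thesis using n_pos by (simp add: abs_mult divide_simps)
  qed
  have bstep: "W (Suc t) \<bullet> v_star = W t \<bullet> v_star + \<eta> * ((1/real n) * (\<Sum>i<n. g t i * \<beta> i))" for t
    unfolding step \<beta>_def by simp
  have main: "(\<forall>s\<le>t. logistic_risk n x (W s) > 1 / (8 * \<eta>)) \<longrightarrow> \<bar>W t \<bullet> v_star\<bar> \<le> \<eta>" for t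
  proof (induction t)
    case 0
    then show ?case unfolding W_def using eta_pos by simp
  next
    case (Suc t)
    show ?case
    proof
      assume H: "\<forall>s\<le>Suc t. logistic_risk n x (W s) > 1 / (8 * \<eta>)"
      hence IH: "\<bar>W t \<bullet> v_star\<bar> \<le> \<eta>" using Suc by auto
      define D where "D = (1/real n) * (\<Sum>i<n. g t i * \<beta> i)"
      have bs: "W (Suc t) \<bullet> v_star = W t \<bullet> v_star + \<eta> * D" unfolding D_def by (rule bstep)
      have D1: "\<bar>D\<bar> \<le> 1" unfolding D_def by (rule Dbound)
      show "\<bar>W (Suc t) \<bullet> v_star\<bar> \<le> \<eta>"
      proof (cases "t = 0")
        case True
        hence "W t \<bullet> v_star = 0" unfolding W_def by simp
        moreover have "\<bar>\<eta> * D\<bar> \<le> \<eta>" using D1 eta_pos by (simp add: abs_mult mult_le_cancel_left1)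
        ultimately show ?thesis using bs by simp
      next
        case False
        have Ft: "1/(8*\<eta>) < (1/real n) * (\<Sum>i<n. ln (1 + exp (- (W t \<bullet> x i))))"
          using H unfolding logistic_risk_def by auto
        have at: "\<eta>*\<gamma>/2 \<le> W t \<bullet> w_star" using alow False by simp
        have a0: "0 \<le> W t \<bullet> w_star" using at eta_pos mf by (smt (verit) divide_nonneg_pos mult_nonneg_nonneg)
        have au: "u \<le> (W t \<bullet> w_star) * \<gamma>"
        proof -
          have "(\<eta>*\<gamma>/2) * \<gamma> \<le> (W t \<bullet> w_star) * \<gamma>" using at mf by (intro mult_right_mono) auto
          thus ?thesis unfolding u_def by (simp add: power2_eq_square)
        qed
        have edn: "-1 \<le> D" "D \<le> 1" using D1 by auto
        have eD: "- \<eta> \<le> \<eta> * D" "\<eta> * D \<le> \<eta>"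
        proof -
          have "\<eta> * (-1) \<le> \<eta> * D" using edn eta_pos by (intro mult_left_mono) auto
          thus "- \<eta> \<le> \<eta> * D" by simp
          have "\<eta> * D \<le> \<eta> * 1" using edn eta_pos by (intro mult_left_mono) auto
          thus "\<eta> * D \<le> \<eta>" by simp
        qed
        show ?thesis
        proof (cases "0 \<le> W t \<bullet> v_star")
          case True
          have "(\<Sum>i<n. (1/(1+exp((\<lambda>i. W t \<bullet> x i) i))) * \<beta> i) \<le> 0"
            apply (rule key[where \<alpha>=\<alpha> and a="W t \<bullet> w_star" and b="W t \<bullet> v_star" and \<eta>=\<eta> and \<gamma>=\<gamma> and u=u and Z=Z])
            using eta_n eta_pos Z_def numr a0 au True IH dec mf bet1 Ft by auto
          hence "D \<le> 0" unfolding D_def g_def using n_pos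
            by (simp add: divide_simps mult_nonpos_nonneg)
          hence "\<eta> * D \<le> 0" using eta_pos by (simp add: mult_nonneg_nonpos)
          thus ?thesis using bs IH True eD by linarith
        next
          case False
          have "(\<Sum>i<n. (1/(1+exp((\<lambda>i. W t \<bullet> x i) i))) * (- \<beta> i)) \<le> 0"
            apply (rule key[where \<alpha>=\<alpha> and a="W t \<bullet> w_star" and b="- (W t \<bullet> v_star)" and \<eta>=\<eta> and \<gamma>=\<gamma> and u=u and Z=Z])
            using eta_n eta_pos Z_def numr a0 au False IH dec mf bet1 Ft by auto
          hence "0 \<le> D" unfolding D_def g_def using n_pos
            by (simp add: divide_simps sum_negf)
          hence "0 \<le> \<eta> * D" using eta_pos by simp
          thus ?thesis using bs IH False eD by linarith
        qed
      qed
    qed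
  qed
  show ?thesis using main unfolding W_def by blast
qed

end
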